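(* There exists a universal constant $C$ such that for every integer $k\ge C$ and every 3-regular graph $G$, $\mathrm{Opt}(G)<\frac{332}{331}\,\mathrm{MaxCut}(G)$.
   Context: For a 3-regular graph $G$ on $n$ vertices with adjacency matrix $A$, let $Q_G=\frac12\big(I-\frac13A\big)$, $\mathrm{MaxCut}(G)=\max_{x\in\{\pm1/\sqrt n\}^n}x^TQ_Gx$, $p_G(x)=(x^TQ_Gx)\prod_{i=1}^n(nx_i^2)^k$ for $x\in\mathbb{R}^n$ (with $k$ a positive integer), and $\mathrm{Opt}(G)=\max_{x\in\mathbb{R}^n,\ \|x\|_2=1}p_G(x)$. *)

theory Defs
  imports Complex_Main
begin

definition cubic_graph :: "nat \<Rightarrow> (nat \<Rightarrow> nat \<Rightarrow> bool) \<Rightarrow> bool" where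
  "cubic_graph n E \<longleftrightarrow>
     (\<forall>i<n. \<forall>j<n. E i j \<longleftrightarrow> E j i) \<and>
     (\<forall>i<n. \<not> E i i) \<and>
     (\<forall>i<n. card {j. j < n \<and> E i j} = 3)"

definition adj :: "(nat \<Rightarrow> nat \<Rightarrow> bool) \<Rightarrow> nat \<Rightarrow> nat \<Rightarrow> real" where
  "adj E i j = (if E i j then 1 else 0)"

text \<open>Quadratic form x^T Q_G x with Q_G = 1/2 (I - A/3); vectors of R^n are
  functions nat => real, only the coordinates 0..<n matter.\<close>
definition QG :: "nat \<Rightarrow> (nat \<Rightarrow> nat \<Rightarrow> bool) \<Rightarrow> (nat \<Rightarrow> real) \<Rightarrow> real" where
  "QG n E x = (1/2) * ((\<Sum>i<n. (x i)^2)
      - (1/3) * (\<Sum>i<n. \<Sum>j<n. adj E i j * x i * x j))"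

definition MaxCut :: "nat \<Rightarrow> (nat \<Rightarrow> nat \<Rightarrow> bool) \<Rightarrow> real" where
  "MaxCut n E = Max (QG n E ` {x. (\<forall>i<n. x i = 1 / sqrt n \<or> x i = - (1 / sqrt n))
                                  \<and> (\<forall>i\<ge>n. x i = 0)})"

definition pG :: "nat \<Rightarrow> (nat \<Rightarrow> nat \<Rightarrow> bool) \<Rightarrow> nat \<Rightarrow> (nat \<Rightarrow> real) \<Rightarrow> real" where
  "pG n E k x = QG n E x * (\<Prod>i<n. (real n * (x i)^2) ^ k)"

text \<open>Opt(G): maximum of p_G over the unit sphere of R^n (attained by compactness,
  so it equals the supremum).\<close>
definition Opt :: "nat \<Rightarrow> (nat \<Rightarrow> nat \<Rightarrow> bool) \<Rightarrow> nat \<Rightarrow> real" where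
  "Opt n E k = Sup (pG n E k ` {x. (\<Sum>i<n. (x i)^2) = 1 \<and> (\<forall>i\<ge>n. x i = 0)})"

end

theory Submission
  imports Defs
begin

definition LL :: "nat \<Rightarrow> (nat \<Rightarrow> nat \<Rightarrow> bool) \<Rightarrow> (nat \<Rightarrow> real) \<Rightarrow> (nat \<Rightarrow> real) \<Rightarrow> real" where
  "LL n E u v = (\<Sum>i<n. \<Sum>j<n. adj E i j * u i * v j)"

lemma QG_LL: "QG n E x = 1/2 * ((\<Sum>i<n. (x i)^2) - 1/3 * LL n E x x)"
  by (simp add: QG_def LL_def)

lemma deg1:
  assumes "cubic_graph n E" "i < n"
  shows "(\<Sum>j<n. adj E i j) = 3"
proof -
  have "(\<Sum>j<n. adj E i j) = (\<Sum>j<n. if E i j then 1 else 0)"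
    by (simp add: adj_def)
  also have "\<dots> = (\<Sum>j\<in>{j\<in>{..<n}. E i j}. 1)"
    by (rule sum.inter_filter[symmetric]) simp
  also have "{j\<in>{..<n}. E i j} = {j. j < n \<and> E i j}" by auto
  finally show ?thesis using assms unfolding cubic_graph_def by simp
qed

lemma deg2:
  assumes "cubic_graph n E" "j < n"
  shows "(\<Sum>i<n. adj E i j) = 3"
proof -
  have "(\<Sum>i<n. adj E i j) = (\<Sum>i<n. adj E j i)"
    apply (rule sum.cong) using assms unfolding cubic_graph_def adj_def by auto
  then show ?thesis using deg1[OF assms] by simp
qed

lemma amgm:
  fixes t u v :: real
  assumes "t > 0"
  shows "\<bar>u * v\<bar> \<le> (t * u^2 + v^2 / t) / 2"
proof -
  have "0 \<le> (t * \<bar>u\<bar> - \<bar>v\<bar>)^2" by simp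
  hence "2 * t * \<bar>u\<bar> * \<bar>v\<bar> \<le> t^2 * u^2 + v^2"
    by (simp add: power2_eq_square algebra_simps)
  hence "t * (2 * \<bar>u * v\<bar>) \<le> t * (t * u^2 + v^2 / t)"
    using assms by (simp add: abs_mult algebra_simps power2_eq_square)
  hence "2 * \<bar>u * v\<bar> \<le> t * u^2 + v^2 / t"
    using assms mult_le_cancel_left_pos by blast
  thus ?thesis by simp
qed

lemma adj_nonneg: "0 \<le> adj E i j" by (simp add: adj_def)

lemma LL_bound:
  assumes "cubic_graph n E" "t > 0"
  shows "\<bar>LL n E u v\<bar> \<le> 3/2 * (t * (\<Sum>i<n. (u i)^2) + (\<Sum>i<n. (v i)^2) / t)"
proof -
  have "\<bar>LL n E u v\<bar> \<le> (\<Sum>i<n. \<Sum>j<n. adj E i j * ((t * (u i)^2 + (v j)^2 / t) / 2))"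
    unfolding LL_def
    apply (rule order_trans[OF sum_abs]) apply (rule sum_mono)
    apply (rule order_trans[OF sum_abs]) apply (rule sum_mono)
    using amgm[OF assms(2)] adj_nonneg
    by (simp add: abs_mult mult.assoc mult_left_mono)
  also have "\<dots> = (\<Sum>i<n. \<Sum>j<n. (t/2) * (u i)^2 * adj E i j)
                 + (\<Sum>i<n. \<Sum>j<n. (1/(2*t)) * (v j)^2 * adj E i j)"
    by (simp add: sum.distrib[symmetric] algebra_simps add_divide_distrib)
  also have "(\<Sum>i<n. \<Sum>j<n. (t/2) * (u i)^2 * adj E i j) = (\<Sum>i<n. (t/2) * (u i)^2 * 3)"
  proof (rule sum.cong)
    fix i assume "i \<in> {..<n}"
    have "(\<Sum>j<n. (t/2) * (u i)^2 * adj E i j) = (t/2) * (u i)^2 * (\<Sum>j<n. adj E i j)"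
      by (simp add: sum_distrib_left)
    then show "(\<Sum>j<n. (t/2) * (u i)^2 * adj E i j) = (t/2) * (u i)^2 * 3"
      using deg1[OF assms(1)] \<open>i \<in> {..<n}\<close> by simp
  qed simp
  also have "(\<Sum>i<n. \<Sum>j<n. (1/(2*t)) * (v j)^2 * adj E i j) = (\<Sum>j<n. \<Sum>i<n. (1/(2*t)) * (v j)^2 * adj E i j)"
    by (rule sum.swap)
  also have "\<dots> = (\<Sum>j<n. (1/(2*t)) * (v j)^2 * 3)"
  proof (rule sum.cong)
    fix j assume "j \<in> {..<n}"
    have "(\<Sum>i<n. (1/(2*t)) * (v j)^2 * adj E i j) = (1/(2*t)) * (v j)^2 * (\<Sum>i<n. adj E i j)"
      by (simp add: sum_distrib_left)
    then show "(\<Sum>i<n. (1/(2*t)) * (v j)^2 * adj E i j) = (1/(2*t)) * (v j)^2 * 3"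
      using deg2[OF assms(1)] \<open>j \<in> {..<n}\<close> by simp
  qed simp
  finally have h: "\<bar>LL n E u v\<bar> \<le> (\<Sum>i<n. (t/2) * (u i)^2 * 3) + (\<Sum>j<n. (1/(2*t)) * (v j)^2 * 3)" .
  have e1: "(\<Sum>i<n. (t/2) * (u i)^2 * 3) = 3/2 * t * (\<Sum>i<n. (u i)^2)"
    by (simp add: sum_distrib_left algebra_simps)
  have e2: "(\<Sum>j<n. (1/(2*t)) * (v j)^2 * 3) = 3/2 * ((\<Sum>i<n. (v i)^2) / t)"
    by (simp add: sum_distrib_left sum_divide_distrib algebra_simps)
  show ?thesis using h unfolding e1 e2 by (simp add: algebra_simps)
qed

lemma LL_add: "LL n E (\<lambda>i. u i + v i) (\<lambda>i. u i + v i) = LL n E u u + LL n E u v + LL n E v u + LL n E v v"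
  by (simp add: LL_def algebra_simps sum.distrib)

lemma LL_sym:
  assumes "cubic_graph n E"
  shows "LL n E u v = LL n E v u"
proof -
  have "LL n E u v = (\<Sum>j<n. \<Sum>i<n. adj E i j * u i * v j)" unfolding LL_def by (rule sum.swap)
  also have "\<dots> = LL n E v u" unfolding LL_def
    apply (rule sum.cong, simp, rule sum.cong, simp)
    using assms unfolding cubic_graph_def adj_def by auto
  finally show ?thesis .
qed

definition SV :: "nat \<Rightarrow> (nat \<Rightarrow> real) set" where
  "SV n = {x. (\<forall>i<n. x i = 1 / sqrt n \<or> x i = - (1 / sqrt n)) \<and> (\<forall>i\<ge>n. x i = 0)}"

lemma MaxCut_SV: "MaxCut n E = Max (QG n E ` SV n)"
  by (simp add: MaxCut_def SV_def)

lemma SV_finite: "finite (SV n)"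
proof -
  have "SV n \<subseteq> {f. \<forall>x. (x \<in> {..<n} \<longrightarrow> f x \<in> {1 / sqrt n, - (1 / sqrt n)}) \<and> (x \<notin> {..<n} \<longrightarrow> f x = 0)}"
    unfolding SV_def by auto
  moreover have "finite {f. \<forall>x. (x \<in> {..<n} \<longrightarrow> f x \<in> {1 / sqrt n, - (1 / sqrt n)}) \<and> (x \<notin> {..<n} \<longrightarrow> (f x::real) = 0)}"
    by (rule finite_set_of_finite_funs) auto
  ultimately show ?thesis by (rule finite_subset)
qed

lemma SV_ne: "(\<lambda>i. if i < n then 1 / sqrt n else 0) \<in> SV n"
  by (simp add: SV_def)

lemma MaxCut_ge: "s \<in> SV n \<Longrightarrow> QG n E s \<le> MaxCut n E"
  unfolding MaxCut_SV by (rule Max_ge) (auto simp: SV_finite)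

lemma SV_norm:
  assumes "n > 0" "s \<in> SV n"
  shows "(\<Sum>i<n. (s i)^2) = 1"
proof -
  have "(\<Sum>i<n. (s i)^2) = (\<Sum>i<n. 1 / real n)"
  proof (rule sum.cong)
    fix i assume "i \<in> {..<n}"
    then have "s i = 1 / sqrt n \<or> s i = - (1 / sqrt n)" using assms(2) unfolding SV_def by auto
    then show "(s i)^2 = 1 / real n" by (auto simp: power_divide)
  qed simp
  also have "\<dots> = 1" using assms(1) by simp
  finally show ?thesis .
qed

lemma LL_flip:
  assumes "cubic_graph n E" "i < n"
  shows "LL n E (u(i := - u i)) (u(i := - u i)) = LL n E u u - 4 * u i * (\<Sum>j<n. adj E i j * u j)"
proof -
  define v where "v = (\<lambda>j. if j = i then -2 * u i else 0)"
  have eq: "u(i := - u i) = (\<lambda>j. u j + v j)" by (auto simp: v_def)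
  have sy: "\<And>a. a < n \<Longrightarrow> adj E a i = adj E i a"
    using assms unfolding cubic_graph_def adj_def by auto
  have ii: "adj E i i = 0" using assms unfolding cubic_graph_def adj_def by auto
  have 1: "LL n E u v = -2 * u i * (\<Sum>j<n. adj E i j * u j)"
  proof -
    have "LL n E u v = (\<Sum>a<n. adj E a i * u a * (-2 * u i))"
      unfolding LL_def v_def using assms(2) by (simp add: if_distrib cong: if_cong)
    also have "\<dots> = (\<Sum>a<n. -2 * u i * (adj E i a * u a))"
      by (rule sum.cong) (auto simp: sy)
    finally show ?thesis by (simp add: sum_distrib_left)
  qed
  have 2: "LL n E v u = -2 * u i * (\<Sum>j<n. adj E i j * u j)"
  proof -
    have "\<And>a. (\<Sum>j<n. adj E a j * v a * u j) = (if a = i then (\<Sum>j<n. adj E i j * (-2 * u i) * u j) else 0)"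
      by (simp add: v_def)
    then have "LL n E v u = (\<Sum>a<n. if a = i then (\<Sum>j<n. adj E i j * (-2 * u i) * u j) else 0)"
      unfolding LL_def by simp
    also have "\<dots> = (\<Sum>j<n. adj E i j * (-2 * u i) * u j)" using assms(2) by simp
    finally show ?thesis by (simp add: sum_distrib_left mult.assoc mult.left_commute)
  qed
  have 3: "LL n E v v = 0"
    unfolding LL_def by (intro sum.neutral ballI) (auto simp: v_def ii)
  show ?thesis unfolding eq LL_add 1 2 3 by simp
qed

lemma MaxCut_half:
  assumes "n > 0" "cubic_graph n E"
  shows "1/2 \<le> MaxCut n E"
proof -
  have "QG n E ` SV n \<noteq> {}" using SV_ne by blast
  then have "MaxCut n E \<in> QG n E ` SV n" unfolding MaxCut_SV
    by (rule Max_in[rotated]) (simp add: SV_finite)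
  then obtain s where s: "s \<in> SV n" "QG n E s = MaxCut n E" by auto
  have loc: "u i * (\<Sum>j<n. adj E i j * u j) \<le> 0" if "i < n" "u = s" for i u
  proof -
    have "s(i := - s i) \<in> SV n" using s(1) \<open>i < n\<close> unfolding SV_def by auto
    then have "QG n E (s(i := - s i)) \<le> QG n E s" using MaxCut_ge s(2) by metis
    moreover have "(\<Sum>j<n. ((s(i := - s i)) j)^2) = (\<Sum>j<n. (s j)^2)"
      by (rule sum.cong) auto
    ultimately show ?thesis
      unfolding QG_LL LL_flip[OF assms(2) \<open>i < n\<close>] \<open>u = s\<close> by simp
  qed
  have "LL n E s s = (\<Sum>i<n. s i * (\<Sum>j<n. adj E i j * s j))"
    unfolding LL_def by (simp add: sum_distrib_left mult.assoc mult.left_commute)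
  also have "\<dots> \<le> 0" by (rule sum_nonpos) (use loc in auto)
  finally have "LL n E s s \<le> 0" .
  then show ?thesis using s SV_norm[OF assms(1) s(1)] unfolding QG_LL by simp
qed

lemma pt_exp:
  fixes y :: real
  assumes "0 \<le> y"
  shows "y \<le> exp (2 * sqrt y - 2)"
proof -
  have a: "sqrt y \<le> exp (sqrt y - 1)" using exp_ge_add_one_self[of "sqrt y - 1"] by simp
  have "(sqrt y)^2 \<le> (exp (sqrt y - 1))^2" by (rule power_mono[OF a]) (use assms in simp)
  also have "(exp (sqrt y - 1))^2 = exp (2 * sqrt y - 2)"
    by (simp add: power2_eq_square exp_add[symmetric])
  finally show ?thesis using assms by simp
qed

lemma prod_exp_bound:
  fixes y :: "nat \<Rightarrow> real"
  assumes "finite I" "\<And>i. i \<in> I \<Longrightarrow> 0 \<le> y i"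
  shows "(\<Prod>i\<in>I. y i) \<le> exp (\<Sum>i\<in>I. 2 * sqrt (y i) - 2)"
proof -
  have "(\<Prod>i\<in>I. y i) \<le> (\<Prod>i\<in>I. exp (2 * sqrt (y i) - 2))"
    by (rule prod_mono) (use assms pt_exp in auto)
  also have "\<dots> = exp (\<Sum>i\<in>I. 2 * sqrt (y i) - 2)" by (simp add: exp_sum[OF assms(1)])
  finally show ?thesis .
qed

lemma arith_aux:
  fixes S a b c t q D :: real
  assumes "S \<le> (t+q)/2" "-a \<le> 3/2*(t+q)" "-b \<le> 3*D"
  shows "1/2*(1 + 2*S + D - 1/3*(c + 2*a + b)) \<le> 1/2*(1 - 1/3*c) + t + q + D"
  using assms by (simp add: field_simps)

lemma exp_m1_half: "exp (-1::real) \<le> 1/2"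
proof -
  have "2 \<le> exp (1::real)" using exp_ge_add_one_self[of 1] by simp
  then show ?thesis by (simp add: exp_minus field_simps)
qed

lemma key:
  assumes n: "n > 0" and G: "cubic_graph n E" and k: "16000000 \<le> real k"
    and x1: "(\<Sum>i<n. (x i)^2) = 1" and x0: "\<forall>i\<ge>n. x i = 0"
  shows "pG n E k x \<le> MaxCut n E + 1/1000"
proof -
  define s where "s i = (if i < n then (if 0 \<le> x i then 1 / sqrt n else - (1 / sqrt n)) else 0)" for i
  define d where "d i = x i - s i" for i
  define D where "D = (\<Sum>i<n. (d i)^2)"
  have D0: "0 \<le> D" unfolding D_def by (simp add: sum_nonneg)
  have sS: "s \<in> SV n" unfolding SV_def s_def by auto
  have Qs: "QG n E s \<le> MaxCut n E" using MaxCut_ge[OF sS] .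
  have ns: "(\<Sum>i<n. (s i)^2) = 1" using SV_norm[OF n sS] .
  have MC: "1/2 \<le> MaxCut n E" using MaxCut_half[OF n G] .
  have xsd: "x = (\<lambda>i. s i + d i)" by (auto simp: d_def)
  have sqn: "(sqrt (real n))^2 = real n" by simp
  have sqp: "sqrt (real n) > 0" using n by simp
  define y where "y i = real n * (x i)^2" for i
  have y0: "\<And>i. 0 \<le> y i" unfolding y_def by simp
  have f2: "(sqrt (y i) - 1)^2 = real n * (d i)^2" if "i < n" for i
  proof -
    have sy: "sqrt (y i) = sqrt n * \<bar>x i\<bar>" unfolding y_def by (simp add: real_sqrt_mult)
    have "sqrt n * d i = sqrt n * \<bar>x i\<bar> - 1 \<or> sqrt n * d i = - (sqrt n * \<bar>x i\<bar> - 1)"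
      using that sqp by (auto simp: d_def s_def algebra_simps)
    then have "(sqrt n * d i)^2 = (sqrt n * \<bar>x i\<bar> - 1)^2"
      by (elim disjE) (simp only:, simp only: power2_minus)
    then show ?thesis unfolding sy by (simp add: power_mult_distrib)
  qed
  have sumy: "(\<Sum>i<n. y i) = real n" unfolding y_def using x1 by (simp add: sum_distrib_left[symmetric])
  have "(\<Sum>i<n. 2 * sqrt (y i) - 2) = (\<Sum>i<n. (y i - 1) - (sqrt (y i) - 1)^2)"
    by (rule sum.cong) (auto simp: power2_diff y0)
  also have "\<dots> = (\<Sum>i<n. y i) - real n - (\<Sum>i<n. real n * (d i)^2)"
    by (simp add: sum_subtractf f2)
  also have "\<dots> = - (real n * D)" unfolding sumy D_def by (simp add: sum_distrib_left)
  finally have sE: "(\<Sum>i<n. 2 * sqrt (y i) - 2) = - (real n * D)" .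
  have Py: "(\<Prod>i<n. y i) \<le> exp (- (real n * D))"
    using prod_exp_bound[of "{..<n}" y] y0 sE by simp
  define P where "P = (\<Prod>i<n. (real n * (x i)^2) ^ k)"
  have PP: "P = (\<Prod>i<n. y i) ^ k" unfolding P_def y_def by (simp add: prod_power_distrib)
  have P0: "0 \<le> P" unfolding PP by (simp add: prod_nonneg y0)
  have "P \<le> (exp (- (real n * D))) ^ k" unfolding PP
    by (rule power_mono[OF Py]) (simp add: prod_nonneg y0)
  also have "\<dots> = exp (- (real k * (real n * D)))" by (simp add: exp_of_nat_mult[symmetric])
  also have "\<dots> \<le> exp (- (real k * D))"
  proof -
    have "real k * D \<le> real k * (real n * D)"
      using n D0 by (intro mult_left_mono) (auto simp: mult_le_cancel_right1)
    then show ?thesis by simp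
  qed
  finally have Pb: "P \<le> exp (- (real k * D))" .
  have P1: "P \<le> 1" using Pb D0 by (meson exp_le_one_iff neg_le_0_iff_le order.trans zero_le_mult_iff of_nat_0_le_iff)
  have QX1: "QG n E x \<le> 1"
  proof -
    have "\<bar>LL n E x x\<bar> \<le> 3/2 * (1 * 1 + 1 / 1)" using LL_bound[OF G, of 1 x x] x1 by simp
    then show ?thesis unfolding QG_LL x1 by simp
  qed
  define t :: real where "t = 1/4000"
  have tp: "t > 0" unfolding t_def by simp
  have sumx: "(\<Sum>i<n. (x i)^2) = 1 + 2 * (\<Sum>i<n. s i * d i) + D"
    unfolding D_def ns[symmetric] by (subst xsd) (simp add: power2_sum sum.distrib sum_distrib_left mult.assoc)
  have LLx: "LL n E x x = LL n E s s + 2 * LL n E s d + LL n E d d"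
  proof -
    have "LL n E x x = LL n E (\<lambda>i. s i + d i) (\<lambda>i. s i + d i)" using xsd by simp
    also have "\<dots> = LL n E s s + LL n E s d + LL n E d s + LL n E d d" by (rule LL_add)
    finally show ?thesis by (simp add: LL_sym[OF G, of d s])
  qed
  have sd: "(\<Sum>i<n. s i * d i) \<le> (t + D / t) / 2"
  proof -
    have "(\<Sum>i<n. s i * d i) \<le> (\<Sum>i<n. (t * (s i)^2 + (d i)^2 / t) / 2)"
      by (rule sum_mono) (use amgm[OF tp] in \<open>meson abs_le_D1\<close>)
    also have "\<dots> = (t * (\<Sum>i<n. (s i)^2) + (\<Sum>i<n. (d i)^2) / t) / 2"
      by (simp add: sum_divide_distrib[symmetric] sum.distrib sum_distrib_left)
    finally show ?thesis unfolding ns D_def by simp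
  qed
  have Lsd: "\<bar>LL n E s d\<bar> \<le> 3/2 * (t + D / t)"
    using LL_bound[OF G tp, of s d] unfolding ns D_def by simp
  have Ldd: "\<bar>LL n E d d\<bar> \<le> 3 * D"
    using LL_bound[OF G, of 1 d d] unfolding D_def by simp
  have QXb: "QG n E x \<le> QG n E s + t + D / t + D"
  proof -
    have A: "QG n E x = 1/2*(1 + 2*(\<Sum>i<n. s i * d i) + D - 1/3*(LL n E s s + 2*LL n E s d + LL n E d d))"
      unfolding QG_LL sumx LLx by simp
    have B: "QG n E s = 1/2*(1 - 1/3*LL n E s s)" unfolding QG_LL ns by simp
    show ?thesis
      unfolding A B by (rule arith_aux[OF sd abs_le_D2[OF Lsd] abs_le_D2[OF Ldd]])
  qed
  have pgP: "pG n E k x = QG n E x * P" unfolding pG_def P_def by simp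
  have pg1: "pG n E k x \<le> P"
  proof (cases "0 \<le> QG n E x")
    case True then show ?thesis unfolding pgP using mult_right_mono[OF QX1 P0] by simp
  next
    case False
    then have "QG n E x \<le> 0" by linarith
    then have "QG n E x * P \<le> 0" using P0 by (rule mult_nonpos_nonneg)
    then show ?thesis unfolding pgP using P0 by simp
  qed
  have pg2: "pG n E k x \<le> max 0 (QG n E x)"
  proof (cases "0 \<le> QG n E x")
    case True then show ?thesis unfolding pgP using mult_left_mono[OF P1 True] by simp
  next
    case False
    then have "QG n E x \<le> 0" by linarith
    then have "QG n E x * P \<le> 0" using P0 by (rule mult_nonpos_nonneg)
    then show ?thesis unfolding pgP using P0 by simp
  qed
  show ?thesis
  proof (cases "D < 1/16000000")
    case True
    have q: "D / t \<le> 1/4000" using True unfolding t_def by simp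
    have tv: "t = 1/4000" by (simp add: t_def)
    have "QG n E x \<le> MaxCut n E + 1/1000" using QXb Qs True q tv by linarith
    then show ?thesis using pg2 MC by linarith
  next
    case False
    have D1: "1/16000000 \<le> D" using False by linarith
    have "(16000000::real) * (1/16000000) \<le> real k * D"
      by (rule mult_mono[OF k D1]) simp_all
    then have kD: "1 \<le> real k * D" by simp
    have "exp (- (real k * D)) \<le> exp (-1)" using kD by simp
    also have "exp (-1::real) \<le> 1/2" by (rule exp_m1_half)
    finally have "exp (- (real k * D)) \<le> 1/2" .
    then show ?thesis using pg1 Pb MC by linarith
  qed
qed

theorem mainTheorem19:
  shows "\<exists>C::real. \<forall>k::nat. \<forall>n::nat. \<forall>E.
           0 < k \<and> C \<le> real k \<and> 0 < n \<and> cubic_graph n E \<longrightarrow>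
           Opt n E k < (332 / 331) * MaxCut n E"
proof (intro exI allI impI)
  fix k n E
  assume a: "0 < k \<and> (16000000::real) \<le> real k \<and> 0 < n \<and> cubic_graph n E"
  then have n: "0 < n" and G: "cubic_graph n E" and k: "16000000 \<le> real k" by auto
  define A where "A = {x. (\<Sum>i<n. (x i)^2) = 1 \<and> (\<forall>i\<ge>n. x i = (0::real))}"
  define e where "e = (\<lambda>i. if i < n then 1 / sqrt n else (0::real))"
  have eS: "e \<in> SV n" unfolding e_def by (rule SV_ne)
  have "e \<in> A" unfolding A_def using SV_norm[OF n eS] by (simp add: e_def)
  then have ne: "A \<noteq> {}" by blast
  have "Opt n E k \<le> MaxCut n E + 1/1000" unfolding Opt_def A_def[symmetric]
  proof (rule cSUP_least[OF ne])
    fix x assume "x \<in> A"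
    then have x1: "(\<Sum>i<n. (x i)^2) = 1" and x0: "\<forall>i\<ge>n. x i = 0" unfolding A_def by auto
    from key[OF n G k x1 x0] show "pG n E k x \<le> MaxCut n E + 1/1000" .
  qed
  moreover have "1/2 \<le> MaxCut n E" using MaxCut_half[OF n G] .
  ultimately show "Opt n E k < (332 / 331) * MaxCut n E" by linarith
qed

end
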